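(* Let $\lambda$ be a nonempty partition and $\tau=(i,j)$ a corner cell of its Young diagram ($j=\lambda_i$ and either $i=\ell$ or $\lambda_{i+1}<\lambda_i$). Let $\hat\lambda$ be $\lambda$ with the cell $\tau$ removed, $\alpha=(\lambda_1-j,\dots,\lambda_{i-1}-j)$ (zero parts discarded) and $\beta=(\lambda_{i+1},\dots,\lambda_\ell)$. Then $$N(\lambda)=N(\hat\lambda)\cdot N(\mathbb 1)+N(\alpha)\cdot N(\beta)=N(\hat\lambda)+N(\alpha)\,N(\beta).$$
   Context: A partition $\lambda=(\lambda_1\ge\dots\ge\lambda_\ell>0)$ is identified with its Young (Ferrers) diagram $\{(r,c):1\le r\le\ell,\ 1\le c\le\lambda_r\}$. For partitions $\mu,\lambda$, $\mu\subseteq\lambda$ means $\mu_k\le\lambda_k$ for all $k$. The Ferrers set $\mathcal F(\lambda)$ is the set of all partitions $\mu\subseteq\lambda$ (including the empty one), equivalently the set of Dyck/lattice paths whose Ferrers diagram is contained in that of $\lambda$; $N(\lambda)=|\mathcal F(\lambda)|$, and the empty diagram $\mathbb 1$ has $N(\mathbb 1)=1$. *)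

theory Defs
  imports Main
begin

text \<open>A partition is a weakly decreasing list of positive naturals; the list
  [lambda_1, ..., lambda_l] is stored 0-based, i.e. lambda_k = lam ! (k-1).\<close>
definition is_partition :: "nat list \<Rightarrow> bool" where
  "is_partition xs \<longleftrightarrow> sorted_wrt (\<ge>) xs \<and> (\<forall>x\<in>set xs. 0 < x)"

definition part :: "nat list \<Rightarrow> nat \<Rightarrow> nat" where
  "part xs k = (if k < length xs then xs ! k else 0)"

definition part_subseteq :: "nat list \<Rightarrow> nat list \<Rightarrow> bool" where
  "part_subseteq mu lam \<longleftrightarrow> (\<forall>k. part mu k \<le> part lam k)"

definition ferrers :: "nat list \<Rightarrow> nat list set" where
  "ferrers lam = {mu. is_partition mu \<and> part_subseteq mu lam}"

definition N :: "nat list \<Rightarrow> nat" where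
  "N lam = card (ferrers lam)"

end

theory Submission
  imports Defs
begin

definition antit :: "(nat \<Rightarrow> nat) \<Rightarrow> bool" where
  "antit g \<longleftrightarrow> (\<forall>k l. k \<le> l \<longrightarrow> g l \<le> g k)"

definition GG :: "(nat \<Rightarrow> nat) \<Rightarrow> (nat \<Rightarrow> nat) set" where
  "GG b = {g. antit g \<and> (\<forall>k. g k \<le> b k)}"

lemma part_pos: "is_partition xs \<Longrightarrow> 0 < part xs k \<longleftrightarrow> k < length xs"
  unfolding is_partition_def part_def by auto

lemma inj_part: "inj_on part (ferrers xs)"
proof
  fix a b assume a: "a \<in> ferrers xs" and b: "b \<in> ferrers xs" and e: "part a = part b"
  have pa: "is_partition a" "is_partition b" using a b by (auto simp: ferrers_def)
  have l: "length a = length b"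
  proof -
    have "\<And>k. k < length a \<longleftrightarrow> k < length b"
      using part_pos[OF pa(1)] part_pos[OF pa(2)] e by metis
    then show ?thesis by (meson linorder_neqE_nat less_irrefl)
  qed
  show "a = b"
  proof (rule nth_equalityI)
    show "length a = length b" by fact
    fix k assume "k < length a"
    then show "a ! k = b ! k" using e l unfolding part_def by (metis)
  qed
qed

lemma antit_part: "is_partition mu \<Longrightarrow> antit (part mu)"
  unfolding antit_def part_def is_partition_def
  by (auto simp: sorted_wrt_iff_nth_less) (metis le_neq_implies_less order_refl)

lemma image_part: "part ` ferrers xs = GG (part xs)"
proof
  show "part ` ferrers xs \<subseteq> GG (part xs)"
    by (auto simp: GG_def ferrers_def part_subseteq_def antit_part)
next
  show "GG (part xs) \<subseteq> part ` ferrers xs"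
  proof
    fix g assume g: "g \<in> GG (part xs)"
    have an: "antit g" and bd: "\<And>k. g k \<le> part xs k" using g by (auto simp: GG_def)
    have z: "g (length xs) = 0" using bd[of "length xs"] by (simp add: part_def)
    define m where "m = (LEAST k. g k = 0)"
    have gm: "g m = 0" unfolding m_def using z by (rule LeastI)
    have pos: "\<And>k. k < m \<Longrightarrow> 0 < g k" unfolding m_def using not_less_Least by blast
    define mu where "mu = map g [0..<m]"
    have pm: "part mu = g"
    proof
      fix k show "part mu k = g k"
      proof (cases "k < m")
        case True then show ?thesis by (simp add: mu_def part_def)
      next
        case False then have "g k \<le> g m" using an unfolding antit_def by simp
        then show ?thesis using False gm by (simp add: mu_def part_def)
      qed
    qed
    have ip: "is_partition mu"
      unfolding is_partition_def mu_def
      using an pos by (auto simp: sorted_wrt_iff_nth_less antit_def)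
    have "mu \<in> ferrers xs" using ip pm bd by (simp add: ferrers_def part_subseteq_def)
    then show "g \<in> part ` ferrers xs" using pm by force
  qed
qed

lemma N_GG: "N xs = card (GG (part xs))"
  unfolding N_def by (metis card_image inj_part image_part)

lemma finite_ferrers: "finite (ferrers xs)"
proof -
  have "ferrers xs \<subseteq> {ys. set ys \<subseteq> {..sum_list xs} \<and> length ys \<le> length xs}"
  proof
    fix ys assume "ys \<in> ferrers xs"
    then have h: "\<And>k. part ys k \<le> part xs k" by (auto simp: ferrers_def part_subseteq_def)
    have len: "length ys \<le> length xs"
    proof (rule ccontr)
      assume "\<not> ?thesis"
      then have "0 < part ys (length xs)" using \<open>ys \<in> ferrers xs\<close>
        by (auto simp: ferrers_def part_pos)
      then show False using h[of "length xs"] by (simp add: part_def)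
    qed
    have "set ys \<subseteq> {..sum_list xs}"
    proof
      fix y assume "y \<in> set ys"
      then obtain k where k: "k < length ys" "y = ys ! k" by (auto simp: in_set_conv_nth)
      then have "y \<le> xs ! k" using h[of k] len by (simp add: part_def)
      also have "\<dots> \<le> sum_list xs" using k len by (intro member_le_sum_list) simp_all
      finally show "y \<in> {..sum_list xs}" by simp
    qed
    then show "ys \<in> {ys. set ys \<subseteq> {..sum_list xs} \<and> length ys \<le> length xs}" using len by simp
  qed
  moreover have "finite {ys. set ys \<subseteq> {..sum_list xs} \<and> length ys \<le> length xs}"
    by (rule finite_lists_length_le) simp
  ultimately show ?thesis by (rule finite_subset)
qed

lemma finite_GG: "finite (GG (part xs))"
  using finite_ferrers image_part by (metis finite_imageI)

lemma comb:
  fixes b :: "nat \<Rightarrow> nat"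
  assumes fin: "finite (GG b)" and bi: "b i = j" and j: "0 < j"
    and lo: "\<And>k. k < i \<Longrightarrow> j \<le> b k" and hi: "\<And>k. i < k \<Longrightarrow> b k \<le> j"
  shows "card (GG b) = card (GG (b(i := j - 1)))
     + card (GG (\<lambda>k. if k < i then b k - j else 0)) * card (GG (\<lambda>k. b (k + i + 1)))"
proof -
  define A where "A = (\<lambda>k. if k < i then b k - j else 0)"
  define C where "C = (\<lambda>k. b (k + i + 1))"
  define S where "S = {g \<in> GG b. g i = j}"
  have split: "GG b = GG (b(i := j - 1)) \<union> S"
  proof (rule set_eqI)
    fix g
    have "(\<forall>k. g k \<le> b k) \<longleftrightarrow> (\<forall>k. g k \<le> (b(i := j - 1)) k) \<or> ((\<forall>k. g k \<le> b k) \<and> g i = j)"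
    proof
      assume h: "\<forall>k. g k \<le> b k"
      show "(\<forall>k. g k \<le> (b(i := j - 1)) k) \<or> ((\<forall>k. g k \<le> b k) \<and> g i = j)"
      proof (cases "g i = j")
        case True then show ?thesis using h by blast
      next
        case False then have "g i \<le> j - 1" using h[rule_format, of i] bi by simp
        then show ?thesis using h by simp
      qed
    next
      assume h: "(\<forall>k. g k \<le> (b(i := j - 1)) k) \<or> ((\<forall>k. g k \<le> b k) \<and> g i = j)"
      show "\<forall>k. g k \<le> b k"
      proof
        fix k
        have le: "(b(i := j - 1)) k \<le> b k" using bi by (cases "k = i") auto
        show "g k \<le> b k"
          using h
        proof
          assume "\<forall>k. g k \<le> (b(i := j - 1)) k"
          then show ?thesis using le le_trans by blast
        next
          assume "(\<forall>k. g k \<le> b k) \<and> g i = j"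
          then show ?thesis by blast
        qed
      qed
    qed
    then show "g \<in> GG b \<longleftrightarrow> g \<in> GG (b(i := j - 1)) \<union> S"
      unfolding S_def GG_def by blast
  qed
  have disj: "GG (b(i := j - 1)) \<inter> S = {}"
  proof -
    have "\<And>g. (\<forall>k. g k \<le> (b(i := j - 1)) k) \<Longrightarrow> g i \<noteq> j"
    proof -
      fix g assume "\<forall>k. g k \<le> (b(i := j - 1)) k"
      then have "g i \<le> j - 1" by (metis fun_upd_same)
      then show "g i \<noteq> j" using j by simp
    qed
    then show ?thesis unfolding S_def GG_def by blast
  qed
  have f1: "finite (GG (b(i := j - 1)))" using fin split by (metis finite_Un)
  have f2: "finite S" using fin split by (metis finite_Un)
  define phi where "phi = (\<lambda>g::nat\<Rightarrow>nat. ((\<lambda>k. if k < i then g k - j else 0), (\<lambda>k. g (k + i + 1))))"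
  define psi where "psi = (\<lambda>(a::nat\<Rightarrow>nat, c::nat\<Rightarrow>nat). (\<lambda>k. if k < i then a k + j else if k = i then j else c (k - Suc i)))"
  have bij: "bij_betw phi S (GG A \<times> GG C)"
  proof (rule bij_betw_byWitness[where f' = psi])
    show "\<forall>g\<in>S. psi (phi g) = g"
    proof
      fix g assume "g \<in> S"
      then have an: "antit g" and gi: "g i = j" by (auto simp: S_def GG_def)
      show "psi (phi g) = g"
      proof
        fix k
        show "psi (phi g) k = g k"
        proof (cases "k < i")
          case True then have "j \<le> g k" using an gi unfolding antit_def by (metis less_imp_le)
          then show ?thesis using True by (simp add: psi_def phi_def)
        next
          case False then show ?thesis using gi by (auto simp: psi_def phi_def)
        qed
      qed
    qed
  next
    show "\<forall>p\<in>GG A \<times> GG C. phi (psi p) = p"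
    proof
      fix p assume "p \<in> GG A \<times> GG C"
      then obtain a c where p: "p = (a, c)" and a: "a \<in> GG A" and c: "c \<in> GG C" by auto
      have "\<And>k. \<not> k < i \<Longrightarrow> a k = 0" using a by (auto simp: GG_def A_def) (metis le_zero_eq)
      then show "phi (psi p) = p" unfolding p by (auto simp: phi_def psi_def)
    qed
  next
    show "phi ` S \<subseteq> GG A \<times> GG C"
    proof
      fix x assume "x \<in> phi ` S"
      then obtain g where g: "g \<in> S" and x: "x = phi g" by auto
      have an: "antit g" and bd: "\<And>k. g k \<le> b k" and gi: "g i = j" using g by (auto simp: S_def GG_def)
      have "antit (\<lambda>k. if k < i then g k - j else 0)"
        using an unfolding antit_def by (auto simp: diff_le_mono)
      moreover have "antit (\<lambda>k. g (k + i + 1))" using an unfolding antit_def by auto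
      ultimately show "x \<in> GG A \<times> GG C" unfolding x phi_def GG_def A_def C_def
        using bd by (auto simp: diff_le_mono)
    qed
  next
    show "psi ` (GG A \<times> GG C) \<subseteq> S"
    proof
      fix x assume "x \<in> psi ` (GG A \<times> GG C)"
      then obtain a c where a: "a \<in> GG A" and c: "c \<in> GG C" and x: "x = psi (a, c)" by auto
      have aa: "antit a" and ab: "\<And>k. a k \<le> A k" using a by (auto simp: GG_def)
      have ca: "antit c" and cb: "\<And>k. c k \<le> C k" using c by (auto simp: GG_def)
      have cj: "\<And>k. c k \<le> j" proof -
        fix k have "c k \<le> b (k + i + 1)" using cb[of k] by (simp add: C_def)
        also have "\<dots> \<le> j" by (rule hi) simp
        finally show "c k \<le> j" .
      qed
      have xk: "x = (\<lambda>k. if k < i then a k + j else if k = i then j else c (k - Suc i))"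
        using x by (simp add: psi_def)
      have "antit x"
        unfolding antit_def xk
      proof (intro allI impI)
        fix k l :: nat assume kl: "k \<le> l"
        show "(if l < i then a l + j else if l = i then j else c (l - Suc i))
              \<le> (if k < i then a k + j else if k = i then j else c (k - Suc i))"
          using kl aa ca cj unfolding antit_def
          by (auto simp: diff_le_mono intro: le_trans[OF cj])
      qed
      moreover have "\<forall>k. x k \<le> b k"
      proof
        fix k
        show "x k \<le> b k"
        proof (cases "k < i")
          case True then show ?thesis using ab[of k] lo[of k] by (simp add: xk A_def)
        next
          case False
          show ?thesis
          proof (cases "k = i")
            case True then show ?thesis using bi by (simp add: xk)
          next
            case nk: False
            then have "k - Suc i + i + 1 = k" using False by simp
            then show ?thesis using cb[of "k - Suc i"] False nk by (simp add: xk C_def)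
          qed
        qed
      qed
      moreover have "x i = j" by (simp add: xk)
      ultimately show "x \<in> S" by (simp add: S_def GG_def)
    qed
  qed
  have "card (GG b) = card (GG (b(i := j - 1))) + card S"
    using split disj f1 f2 by (simp add: card_Un_disjoint)
  also have "card S = card (GG A \<times> GG C)" using bij by (rule bij_betw_same_card)
  also have "\<dots> = card (GG A) * card (GG C)" by (rule card_cartesian_product)
  finally show ?thesis unfolding A_def C_def .
qed


lemma part_Cons: "part (x # ys) (Suc n) = part ys n"
  by (simp add: part_def)

lemma filter_part: "sorted_wrt (\<ge>) xs \<Longrightarrow> part (filter (\<lambda>x. 0 < x) xs) k = part xs k"
proof (induction xs arbitrary: k)
  case Nil then show ?case by (simp add: part_def)
next
  case (Cons x xs)
  show ?case
  proof (cases "0 < x")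
    case True
    have s: "sorted_wrt (\<ge>) xs" using Cons.prems by simp
    show ?thesis
    proof (cases k)
      case 0 then show ?thesis using True by (simp add: part_def)
    next
      case (Suc n) then show ?thesis using True Cons.IH[OF s, of n] by (simp add: part_Cons)
    qed
  next
    case False
    then have z: "\<forall>y\<in>set xs. y = 0" using Cons.prems by auto
    then have f: "filter (\<lambda>x. 0 < x) (x # xs) = []" using False by (simp add: filter_False)
    show ?thesis
    proof (cases k)
      case 0 then show ?thesis using False f by (simp add: part_def)
    next
      case (Suc n) then show ?thesis using z f by (auto simp: part_def)
    qed
  qed
qed

theorem mainTheorem2:
  fixes lam :: "nat list" and i j :: nat
  assumes "is_partition lam" and "lam \<noteq> []"
    and "i < length lam" and "j = lam ! i"
    and "i = length lam - 1 \<or> lam ! (i + 1) < lam ! i"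
  shows "N lam = N (filter (\<lambda>x. 0 < x) (lam[i := j - 1])) * N []
                 + N (filter (\<lambda>x. 0 < x) (map (\<lambda>x. x - j) (take i lam))) * N (drop (i + 1) lam)
       \<and> N (filter (\<lambda>x. 0 < x) (lam[i := j - 1])) * N []
                 + N (filter (\<lambda>x. 0 < x) (map (\<lambda>x. x - j) (take i lam))) * N (drop (i + 1) lam)
         = N (filter (\<lambda>x. 0 < x) (lam[i := j - 1]))
                 + N (filter (\<lambda>x. 0 < x) (map (\<lambda>x. x - j) (take i lam))) * N (drop (i + 1) lam)"
proof -
  have pl: "is_partition lam" using assms(1) .
  have il: "i < length lam" by fact
  define b where "b = part lam"
  have srt: "sorted_wrt (\<ge>) lam" and posl: "\<forall>x\<in>set lam. 0 < x"
    using pl by (auto simp: is_partition_def)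
  have nthle: "\<And>k l. k \<le> l \<Longrightarrow> l < length lam \<Longrightarrow> lam ! l \<le> lam ! k"
    using srt by (metis le_neq_implies_less order_refl sorted_wrt_iff_nth_less)
  have j0: "0 < j" using posl il assms(4) by auto
  have bi: "b i = j" using il assms(4) by (simp add: b_def part_def)
  have lo: "\<And>k. k < i \<Longrightarrow> j \<le> b k" using il assms(4) nthle by (simp add: b_def part_def)
  have hi: "\<And>k. i < k \<Longrightarrow> b k \<le> j" using il assms(4) nthle by (simp add: b_def part_def)
  have fin: "finite (GG b)" unfolding b_def by (rule finite_GG)
  have s1: "sorted_wrt (\<ge>) (lam[i := j - 1])"
    unfolding sorted_wrt_iff_nth_less
  proof (intro allI impI)
    fix k l assume kl1: "k < l" and kl2: "l < length (lam[i := j - 1])"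
    have kl: "k < l \<and> l < length (lam[i := j - 1])" using kl1 kl2 by simp
    show "lam[i := j - 1] ! l \<le> lam[i := j - 1] ! k"
    proof -
      have "l = i \<Longrightarrow> j - 1 \<le> lam ! k"
      proof -
        assume "l = i"
        then have "lam ! i \<le> lam ! k" using kl nthle[of k i] by simp
        then show ?thesis using assms(4) by simp
      qed
      moreover have "k = i \<Longrightarrow> lam ! l \<le> j - 1"
      proof -
        assume ki: "k = i"
        then have "i + 1 < length lam" using kl by auto
        then have "lam ! (i+1) < j" using assms(5) assms(4) by auto
        moreover have "lam ! l \<le> lam ! (i+1)" using kl ki nthle by simp
        ultimately show ?thesis by simp
      qed
      moreover have "lam ! l \<le> lam ! k" using kl nthle by simp
      ultimately show ?thesis using kl by (cases "l = i"; cases "k = i") (auto simp: nth_list_update)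
    qed
  qed
  have p1: "part (filter (\<lambda>x. 0 < x) (lam[i := j - 1])) = b(i := j - 1)"
  proof
    fix k show "part (filter (\<lambda>x. 0 < x) (lam[i := j - 1])) k = (b(i := j - 1)) k"
      using filter_part[OF s1, of k] il by (auto simp: b_def part_def nth_list_update)
  qed
  have s2: "sorted_wrt (\<ge>) (map (\<lambda>x. x - j) (take i lam))"
    using sorted_wrt_take[OF srt, of i] by (auto simp: sorted_wrt_map elim: sorted_wrt_mono_rel[rotated] intro: diff_le_mono)
  have p2: "part (filter (\<lambda>x. 0 < x) (map (\<lambda>x. x - j) (take i lam))) = (\<lambda>k. if k < i then b k - j else 0)"
  proof
    fix k show "part (filter (\<lambda>x. 0 < x) (map (\<lambda>x. x - j) (take i lam))) k = (if k < i then b k - j else 0)"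
      using filter_part[OF s2, of k] il by (auto simp: b_def part_def)
  qed
  have p3: "part (drop (i + 1) lam) = (\<lambda>k. b (k + i + 1))"
  proof
    fix k show "part (drop (i + 1) lam) k = b (k + i + 1)"
      using il by (auto simp: b_def part_def add.commute add.left_commute)
  qed
  have p0: "N [] = 1"
  proof -
    have "GG (part []) = {\<lambda>_. 0}" by (auto simp: GG_def part_def antit_def)
    then show ?thesis by (simp add: N_GG)
  qed
  have "N lam = N (filter (\<lambda>x. 0 < x) (lam[i := j - 1]))
                 + N (filter (\<lambda>x. 0 < x) (map (\<lambda>x. x - j) (take i lam))) * N (drop (i + 1) lam)"
    unfolding N_GG p1 p2 p3 b_def[symmetric] using comb[OF fin bi j0 lo hi] by simp
  then show ?thesis using p0 by simp
qed

end
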